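(* Let $A\in B(\mathbb{H})$ with $A\ge0$ and let $X,Y\in B_A(\mathbb{H})$. Then \[ w_A(Y^{\sharp_A}X)\le\frac14\big\|XX^{\sharp_A}+YY^{\sharp_A}\big\|_A+\frac12 w_A(XY^{\sharp_A}). \]
   Context: $\mathbb{H}$ is a complex Hilbert space, $B(\mathbb{H})$ the bounded linear operators on it, $O$ the zero operator. For a positive operator $A\in B(\mathbb{H})$ ($A\ge0$) set $\langle x,y\rangle_A=\langle Ax,y\rangle$ and $\|x\|_A=\sqrt{\langle x,x\rangle_A}$; $A>0$ means $\langle Ax,x\rangle>0$ for all $x\ne0$. For $T\in B(\mathbb{H})$: $\|T\|_A=\sup\{\|Tx\|_A/\|x\|_A: x\in\overline{R(A)},x\ne0\}$, where $R(A)$ is the range of $A$; $W_A(T)=\{\langle Tx,x\rangle_A:x\in\mathbb{H},\|x\|_A=1\}$, $w_A(T)=\sup\{|\lambda|:\lambda\in W_A(T)\}$ and $m_A(T)=\inf\{|\lambda|:\lambda\in W_A(T)\}$. $B_A(\mathbb{H})$ is the set of $T\in B(\mathbb{H})$ for which some $R\in B(\mathbb{H})$ satisfies $AR=T^*A$; for such $T$, $T^{\sharp_A}$ denotes the distinguished such $R$, namely the unique solution of $AR=T^*A$ with range contained in $\overline{R(A)}$ (when $A>0$ it is the unique solution). $\mathrm{Re}_A(T)=\frac12(T+T^{\sharp_A})$. *)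

theory Defs
  imports "HOL-Analysis.Analysis"
begin

text \<open>The distribution has no complex vector spaces, so we introduce the class of complex
  Hilbert spaces: a real Banach space with a compatible complex scalar multiplication and a
  complex inner product (linear in the first argument) inducing the norm.\<close>

class complex_hilbert = banach +
  fixes scaleC :: "complex \<Rightarrow> 'a \<Rightarrow> 'a" (infixr "*\<^sub>C" 75)
    and cinner :: "'a \<Rightarrow> 'a \<Rightarrow> complex"
  assumes scaleC_add_right: "a *\<^sub>C (x + y) = a *\<^sub>C x + a *\<^sub>C y"
    and scaleC_add_left: "(a + b) *\<^sub>C x = a *\<^sub>C x + b *\<^sub>C x"
    and scaleC_scaleC: "a *\<^sub>C (b *\<^sub>C x) = (a * b) *\<^sub>C x"
    and scaleC_one: "1 *\<^sub>C x = x"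
    and scaleR_scaleC: "scaleR r x = complex_of_real r *\<^sub>C x"
    and cinner_add_left: "cinner (x + y) z = cinner x z + cinner y z"
    and cinner_scaleC_left: "cinner (a *\<^sub>C x) y = a * cinner x y"
    and cinner_commute: "cinner y x = cnj (cinner x y)"
    and cinner_ge_zero: "0 \<le> Re (cinner x x)"
    and cinner_eq_zero_iff: "cinner x x = 0 \<longleftrightarrow> x = 0"
    and norm_eq_sqrt_cinner: "norm x = sqrt (Re (cinner x x))"

instantiation complex :: complex_hilbert
begin
definition scaleC_complex :: "complex \<Rightarrow> complex \<Rightarrow> complex" where
  "scaleC_complex a x = a * x"
definition cinner_complex :: "complex \<Rightarrow> complex \<Rightarrow> complex" where
  "cinner_complex x y = x * cnj y"
instance
proof
  fix a b x y z :: complex and r :: real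
  show "a *\<^sub>C (x + y) = a *\<^sub>C x + a *\<^sub>C y" by (simp add: scaleC_complex_def algebra_simps)
  show "(a + b) *\<^sub>C x = a *\<^sub>C x + b *\<^sub>C x" by (simp add: scaleC_complex_def algebra_simps)
  show "a *\<^sub>C (b *\<^sub>C x) = (a * b) *\<^sub>C x" by (simp add: scaleC_complex_def)
  show "1 *\<^sub>C x = x" by (simp add: scaleC_complex_def)
  show "scaleR r x = complex_of_real r *\<^sub>C x" by (simp add: scaleC_complex_def scaleR_conv_of_real)
  show "cinner (x + y) z = cinner x z + cinner y z" by (simp add: cinner_complex_def algebra_simps)
  show "cinner (a *\<^sub>C x) y = a * cinner x y" by (simp add: cinner_complex_def scaleC_complex_def)
  show "cinner y x = cnj (cinner x y)" by (simp add: cinner_complex_def)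
  show "0 \<le> Re (cinner x x)" by (simp add: cinner_complex_def)
  show "cinner x x = 0 \<longleftrightarrow> x = 0" by (simp add: cinner_complex_def)
  show "norm x = sqrt (Re (cinner x x))" by (simp add: cinner_complex_def cmod_def power2_eq_square)
qed
end

definition bop :: "('a::complex_hilbert \<Rightarrow> 'a) \<Rightarrow> bool" where
  "bop T \<longleftrightarrow> bounded_linear T \<and> (\<forall>c x. T (c *\<^sub>C x) = c *\<^sub>C T x)"

definition adj :: "('a::complex_hilbert \<Rightarrow> 'a) \<Rightarrow> ('a \<Rightarrow> 'a)" where
  "adj T = (THE S. bop S \<and> (\<forall>x y. cinner (S x) y = cinner x (T y)))"

definition positive_op :: "('a::complex_hilbert \<Rightarrow> 'a) \<Rightarrow> bool" where
  "positive_op A \<longleftrightarrow> bop A \<and> (\<forall>x. Im (cinner (A x) x) = 0 \<and> 0 \<le> Re (cinner (A x) x))"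

definition BA :: "('a::complex_hilbert \<Rightarrow> 'a) \<Rightarrow> ('a \<Rightarrow> 'a) set" where
  "BA A = {T. bop T \<and> (\<exists>R. bop R \<and> A \<circ> R = adj T \<circ> A)}"

definition sharpA :: "('a::complex_hilbert \<Rightarrow> 'a) \<Rightarrow> ('a \<Rightarrow> 'a) \<Rightarrow> ('a \<Rightarrow> 'a)" where
  "sharpA A T = (THE R. bop R \<and> A \<circ> R = adj T \<circ> A \<and> range R \<subseteq> closure (range A))"

definition normA :: "('a::complex_hilbert \<Rightarrow> 'a) \<Rightarrow> 'a \<Rightarrow> real" where
  "normA A x = sqrt (Re (cinner (A x) x))"

text \<open>Suprema of sets of nonnegative reals; the empty supremum is taken to be 0.\<close>
definition opnormA :: "('a::complex_hilbert \<Rightarrow> 'a) \<Rightarrow> ('a \<Rightarrow> 'a) \<Rightarrow> real" where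
  "opnormA A T = Sup (insert 0 {normA A (T x) / normA A x | x. x \<in> closure (range A) \<and> x \<noteq> 0})"

definition numrangeA :: "('a::complex_hilbert \<Rightarrow> 'a) \<Rightarrow> ('a \<Rightarrow> 'a) \<Rightarrow> complex set" where
  "numrangeA A T = {cinner (A (T x)) x | x. normA A x = 1}"

definition numradA :: "('a::complex_hilbert \<Rightarrow> 'a) \<Rightarrow> ('a \<Rightarrow> 'a) \<Rightarrow> real" where
  "numradA A T = Sup (insert 0 (cmod ` numrangeA A T))"

end

theory Submission
  imports Defs
begin

lemma scaleC_zero_right[simp]: "a *\<^sub>C (0::'a::complex_hilbert) = 0"
  using scaleC_add_right[of a "0::'a" 0] by simp

lemma scaleC_zero_left[simp]: "0 *\<^sub>C (x::'a::complex_hilbert) = 0"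
  using scaleC_add_left[of 0 0 x] by simp

lemma scaleC_minus_right: "a *\<^sub>C (- x::'a::complex_hilbert) = - (a *\<^sub>C x)"
  using scaleC_add_right[of a "-x" x] by (simp add: eq_neg_iff_add_eq_0)

lemma scaleC_minus_left: "(- a) *\<^sub>C (x::'a::complex_hilbert) = - (a *\<^sub>C x)"
  using scaleC_add_left[of "-a" a x] by (simp add: eq_neg_iff_add_eq_0)

lemma scaleC_diff_right: "a *\<^sub>C (x - y::'a::complex_hilbert) = a *\<^sub>C x - a *\<^sub>C y"
  using scaleC_add_right[of a x "-y"] by (simp add: scaleC_minus_right)

lemma scaleC_diff_left: "(a - b) *\<^sub>C (x::'a::complex_hilbert) = a *\<^sub>C x - b *\<^sub>C x"
  using scaleC_add_left[of a "-b" x] by (simp add: scaleC_minus_left)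

lemma scaleC_of_real: "complex_of_real r *\<^sub>C (x::'a::complex_hilbert) = r *\<^sub>R x"
  by (simp add: scaleR_scaleC)

lemma cinner_zero_left[simp]: "cinner (0::'a::complex_hilbert) y = 0"
  using cinner_add_left[of "0::'a" 0 y] by simp

lemma cinner_minus_left: "cinner (- x::'a::complex_hilbert) y = - cinner x y"
  using cinner_add_left[of "-x" x y] by (simp add: eq_neg_iff_add_eq_0)

lemma cinner_diff_left: "cinner (x - z::'a::complex_hilbert) y = cinner x y - cinner z y"
  using cinner_add_left[of x "-z" y] by (simp add: cinner_minus_left)

lemma cinner_add_right: "cinner (x::'a::complex_hilbert) (y + z) = cinner x y + cinner x z"
  by (metis cinner_add_left cinner_commute complex_cnj_add)

lemma cinner_scaleC_right: "cinner (x::'a::complex_hilbert) (a *\<^sub>C y) = cnj a * cinner x y"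
  by (metis cinner_scaleC_left cinner_commute complex_cnj_mult)

lemma cinner_zero_right[simp]: "cinner (x::'a::complex_hilbert) 0 = 0"
  by (metis cinner_zero_left cinner_commute complex_cnj_zero)

lemma cinner_minus_right: "cinner (x::'a::complex_hilbert) (- y) = - cinner x y"
  by (metis cinner_minus_left cinner_commute complex_cnj_minus)

lemma cinner_diff_right: "cinner (x::'a::complex_hilbert) (y - z) = cinner x y - cinner x z"
  by (metis cinner_diff_left cinner_commute complex_cnj_diff)

lemma cinner_scaleR_left: "cinner (r *\<^sub>R x::'a::complex_hilbert) y = complex_of_real r * cinner x y"
  by (simp add: scaleR_scaleC cinner_scaleC_left)

lemma cinner_scaleR_right: "cinner (x::'a::complex_hilbert) (r *\<^sub>R y) = complex_of_real r * cinner x y"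
  by (simp add: scaleR_scaleC cinner_scaleC_right)

lemma cinner_self_Im: "Im (cinner (x::'a::complex_hilbert) x) = 0"
proof -
  have "cinner x x = cnj (cinner x x)" by (rule cinner_commute)
  then show ?thesis by (simp add: complex_eq_iff)
qed

lemma cinner_self_real: "cinner (x::'a::complex_hilbert) x = complex_of_real (Re (cinner x x))"
  using cinner_self_Im[of x] by (simp add: complex_eq_iff)

lemma norm_sq_cinner: "(norm (x::'a::complex_hilbert))\<^sup>2 = Re (cinner x x)"
  by (simp add: norm_eq_sqrt_cinner cinner_ge_zero)

section \<open>Hermitian forms and Cauchy-Schwarz\<close>

definition hform :: "('a::complex_hilbert \<Rightarrow> 'a \<Rightarrow> complex) \<Rightarrow> bool" where
  "hform B \<longleftrightarrow> (\<forall>x y z. B (x + y) z = B x z + B y z) \<and> (\<forall>a x y. B (a *\<^sub>C x) y = a * B x y)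
     \<and> (\<forall>x y. B y x = cnj (B x y)) \<and> (\<forall>x. 0 \<le> Re (B x x))"

lemma hform_cinner: "hform (cinner :: 'a::complex_hilbert \<Rightarrow> _)"
  unfolding hform_def by (simp add: cinner_add_left cinner_scaleC_left cinner_commute[symmetric] cinner_ge_zero)

context fixes B :: "'a::complex_hilbert \<Rightarrow> 'a \<Rightarrow> complex" assumes hB: "hform B"
begin

lemma hf_add_left: "B (x + y) z = B x z + B y z" using hB unfolding hform_def by blast
lemma hf_scale_left: "B (a *\<^sub>C x) y = a * B x y" using hB unfolding hform_def by blast
lemma hf_commute: "B y x = cnj (B x y)" using hB unfolding hform_def by blast
lemma hf_ge0: "0 \<le> Re (B x x)" using hB unfolding hform_def by blast

lemma hf_add_right: "B x (y + z) = B x y + B x z"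
  by (metis hf_add_left hf_commute complex_cnj_add)
lemma hf_scale_right: "B x (a *\<^sub>C y) = cnj a * B x y"
  by (metis hf_scale_left hf_commute complex_cnj_mult)
lemma hf_zero_left[simp]: "B 0 y = 0"
  using hf_add_left[of 0 0 y] by simp
lemma hf_zero_right[simp]: "B x 0 = 0"
  by (metis hf_zero_left hf_commute complex_cnj_zero)
lemma hf_minus_left: "B (- x) y = - B x y"
  using hf_add_left[of "-x" x y] by (simp add: eq_neg_iff_add_eq_0)
lemma hf_diff_left: "B (x - z) y = B x y - B z y"
  using hf_add_left[of x "-z" y] by (simp add: hf_minus_left)
lemma hf_minus_right: "B x (- y) = - B x y"
  by (metis hf_minus_left hf_commute complex_cnj_minus)
lemma hf_diff_right: "B x (y - z) = B x y - B x z"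
  by (metis hf_diff_left hf_commute complex_cnj_diff)
lemma hf_self_real: "B x x = complex_of_real (Re (B x x))"
proof -
  have "B x x = cnj (B x x)" by (rule hf_commute)
  then show ?thesis by (simp add: complex_eq_iff)
qed

lemma hf_CS: "(cmod (B x y))\<^sup>2 \<le> Re (B x x) * Re (B y y)"
proof -
  let ?b = "B x y"
  have key: "0 \<le> Re (B x x) - 2 * t * (cmod ?b)\<^sup>2 + t\<^sup>2 * (cmod ?b)\<^sup>2 * Re (B y y)" for t :: real
  proof -
    define c where "c = complex_of_real t * ?b"
    have "B (x - c *\<^sub>C y) (x - c *\<^sub>C y) = B x x - cnj c * ?b - c * B y x + c * cnj c * B y y"
      by (simp add: hf_diff_left hf_diff_right hf_scale_left hf_scale_right right_diff_distrib mult.assoc)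
    also have "\<dots> = B x x - 2 * complex_of_real t * (?b * cnj ?b) + (complex_of_real t)\<^sup>2 * (?b * cnj ?b) * B y y"
      unfolding c_def hf_commute[of x y] by (simp add: power2_eq_square mult_ac)
    also have "\<dots> = complex_of_real (Re (B x x) - 2 * t * (cmod ?b)\<^sup>2 + t\<^sup>2 * (cmod ?b)\<^sup>2 * Re (B y y))"
      apply (subst hf_self_real[of x], subst hf_self_real[of y])
      apply (simp only: complex_norm_square[symmetric])
      by simp
    finally show ?thesis using hf_ge0[of "x - c *\<^sub>C y"] by simp
  qed
  show ?thesis
  proof (cases "Re (B y y) = 0")
    case True
    show ?thesis
    proof (rule ccontr)
      assume "\<not> ?thesis"
      then have pos: "(cmod ?b)\<^sup>2 > 0" using True by simp
      have "0 \<le> Re (B x x) - 2 * ((Re (B x x) + 1) / (2 * (cmod ?b)\<^sup>2)) * (cmod ?b)\<^sup>2"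
        using key[of "(Re (B x x) + 1) / (2 * (cmod ?b)\<^sup>2)"] True by simp
      then show False using pos by (simp add: field_simps)
    qed
  next
    case False
    then have pos: "Re (B y y) > 0" using hf_ge0[of y] by simp
    have "0 \<le> Re (B x x) - 2 * (1 / Re (B y y)) * (cmod ?b)\<^sup>2 + (1 / Re (B y y))\<^sup>2 * (cmod ?b)\<^sup>2 * Re (B y y)"
      by (rule key)
    then have "0 \<le> Re (B x x) - (cmod ?b)\<^sup>2 / Re (B y y)"
      using pos by (simp add: field_simps power2_eq_square)
    then show ?thesis using pos by (simp add: field_simps)
  qed
qed

end

lemma cinner_CS: "cmod (cinner x y) \<le> norm x * norm (y::'a::complex_hilbert)"
proof -
  have "(cmod (cinner x y))\<^sup>2 \<le> (norm x * norm y)\<^sup>2"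
    using hf_CS[OF hform_cinner, of x y] by (simp add: norm_sq_cinner power_mult_distrib)
  then show ?thesis by (rule power2_le_imp_le) simp
qed

section \<open>Bounded operators\<close>

lemma bop_bl: "bop T \<Longrightarrow> bounded_linear T" by (simp add: bop_def)
lemma bop_scaleC: "bop T \<Longrightarrow> T (c *\<^sub>C x) = c *\<^sub>C T x" by (simp add: bop_def)
lemma bop_add: "bop T \<Longrightarrow> T (x + y) = T x + T y" using bounded_linear.linear[OF bop_bl, of T] by (simp add: linear_add)
lemma bop_diff: "bop T \<Longrightarrow> T (x - y) = T x - T y" using bounded_linear.linear[OF bop_bl, of T] by (simp add: linear_diff)
lemma bop_zero: "bop T \<Longrightarrow> T 0 = 0" using bounded_linear.linear[OF bop_bl, of T] by (simp add: linear_0)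
lemma bop_minus: "bop T \<Longrightarrow> T (- x) = - T x" using bounded_linear.linear[OF bop_bl, of T] by (simp add: linear_neg)

lemma bl_cinner_right: "bounded_linear (\<lambda>y. cinner (x::'a::complex_hilbert) y)"
  apply (rule bounded_linear_intro[where K="norm x"])
    apply (simp add: cinner_add_right)
   apply (simp add: cinner_scaleR_right scaleR_conv_of_real)
  by (metis cinner_CS mult.commute)

lemma bl_cinner_left: "bounded_linear (\<lambda>x. cinner (x::'a::complex_hilbert) y)"
  apply (rule bounded_linear_intro[where K="norm y"])
    apply (simp add: cinner_add_left)
   apply (simp add: cinner_scaleR_left scaleR_conv_of_real)
  by (rule cinner_CS)

lemma norm_scaleC: "norm (c *\<^sub>C (x::'a::complex_hilbert)) = cmod c * norm x"
proof -
  have "(norm (c *\<^sub>C x))\<^sup>2 = (cmod c * norm x)\<^sup>2"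
  proof -
    have "cinner (c *\<^sub>C x) (c *\<^sub>C x) = (c * cnj c) * cinner x x"
      by (simp add: cinner_scaleC_left cinner_scaleC_right)
    also have "\<dots> = complex_of_real ((cmod c)\<^sup>2 * Re (cinner x x))"
      by (subst cinner_self_real, simp only: complex_norm_square[symmetric] of_real_mult)
    finally show ?thesis unfolding norm_sq_cinner[of "c *\<^sub>C x"] norm_sq_cinner[of x] power_mult_distrib
      by simp
  qed
  then show ?thesis by (simp add: power2_eq_iff_nonneg)
qed

lemma bl_scaleC: "bounded_linear (\<lambda>x::'a::complex_hilbert. c *\<^sub>C x)"
  apply (rule bounded_linear_intro[where K="cmod c"])
    apply (simp add: scaleC_add_right)
   apply (simp add: scaleR_scaleC scaleC_scaleC mult.commute)
  by (simp add: norm_scaleC mult.commute)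

lemma parallelogram: "(norm (u + v::'a::complex_hilbert))\<^sup>2 + (norm (u - v))\<^sup>2 = 2 * (norm u)\<^sup>2 + 2 * (norm v)\<^sup>2"
  unfolding norm_sq_cinner
  by (simp add: cinner_add_left cinner_add_right cinner_diff_left cinner_diff_right)

section \<open>Subspaces and projection\<close>

definition csub :: "'a::complex_hilbert set \<Rightarrow> bool" where
  "csub M \<longleftrightarrow> 0 \<in> M \<and> (\<forall>x\<in>M. \<forall>y\<in>M. x + y \<in> M) \<and> (\<forall>c. \<forall>x\<in>M. c *\<^sub>C x \<in> M)"

lemma csub_add: "csub M \<Longrightarrow> x \<in> M \<Longrightarrow> y \<in> M \<Longrightarrow> x + y \<in> M" by (simp add: csub_def)
lemma csub_scaleC: "csub M \<Longrightarrow> x \<in> M \<Longrightarrow> c *\<^sub>C x \<in> M" by (simp add: csub_def)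
lemma csub_zero: "csub M \<Longrightarrow> 0 \<in> M" by (simp add: csub_def)
lemma csub_scaleR: "csub M \<Longrightarrow> x \<in> M \<Longrightarrow> r *\<^sub>R x \<in> M" by (simp add: csub_def scaleR_scaleC)
lemma csub_diff: "csub M \<Longrightarrow> x \<in> M \<Longrightarrow> y \<in> M \<Longrightarrow> x - y \<in> M"
  using csub_add[of M x "(-1) *\<^sub>R y"] csub_scaleR[of M y "-1"] by simp

lemma csub_closure: assumes "csub M" shows "csub (closure M)"
  unfolding csub_def
proof (intro conjI ballI allI)
  show "0 \<in> closure M" using assms csub_zero closure_subset by blast
next
  fix x y assume "x \<in> closure M" "y \<in> closure M"
  then obtain f g where f: "\<forall>n. f n \<in> M" "f \<longlonglongrightarrow> x" and g: "\<forall>n. g n \<in> M" "g \<longlonglongrightarrow> y"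
    unfolding closure_sequential by blast
  have "\<forall>n. f n + g n \<in> M" using f g assms csub_add by blast
  moreover have "(\<lambda>n. f n + g n) \<longlonglongrightarrow> x + y" using f g by (intro tendsto_add)
  ultimately show "x + y \<in> closure M" unfolding closure_sequential by (intro exI[of _ "\<lambda>n. f n + g n"]) simp
next
  fix c x assume "x \<in> closure M"
  then have "c *\<^sub>C x \<in> (\<lambda>x. c *\<^sub>C x) ` closure M" by blast
  also have "\<dots> \<subseteq> closure ((\<lambda>x. c *\<^sub>C x) ` M)" by (rule closure_bounded_linear_image_subset[OF bl_scaleC])
  also have "\<dots> \<subseteq> closure M" using assms csub_scaleC by (intro closure_mono) blast
  finally show "c *\<^sub>C x \<in> closure M" .
qed

lemma orth_expand:
  fixes u m :: "'a::complex_hilbert"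
  assumes "m \<noteq> 0"
  shows "(norm (u - (cinner u m / complex_of_real ((norm m)\<^sup>2)) *\<^sub>C m))\<^sup>2
         = (norm u)\<^sup>2 - (cmod (cinner u m))\<^sup>2 / (norm m)\<^sup>2"
proof -
  let ?a = "cinner u m"
  let ?s = "(norm m)\<^sup>2"
  define t where "t = ?a / complex_of_real ?s"
  have s0: "?s \<noteq> 0" using assms by simp
  have mm: "cinner m m = complex_of_real ?s" by (simp add: norm_sq_cinner cinner_self_real[symmetric])
  have "cinner (u - t *\<^sub>C m) (u - t *\<^sub>C m) = cinner u u - cnj t * ?a - t * cinner m u + t * cnj t * cinner m m"
    by (simp add: cinner_diff_left cinner_diff_right cinner_scaleC_left cinner_scaleC_right right_diff_distrib mult.assoc)
  also have "\<dots> = cinner u u - ?a * cnj ?a / complex_of_real ?s"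
    unfolding t_def mm cinner_commute[of m u] using s0
    by (simp add: field_simps power2_eq_square del: of_real_power)
  also have "\<dots> = complex_of_real ((norm u)\<^sup>2 - (cmod ?a)\<^sup>2 / ?s)"
    by (simp add: complex_norm_square[symmetric] norm_sq_cinner cinner_self_real[symmetric] del: of_real_power)
  finally show ?thesis unfolding t_def norm_sq_cinner[of "u - _"] by simp
qed

lemma projection:
  fixes M :: "'a::complex_hilbert set"
  assumes M: "csub M" "closed M"
  shows "\<exists>p\<in>M. \<forall>m\<in>M. cinner (x - p) m = 0"
proof -
  define D where "D = (\<lambda>m. (norm (x - m))\<^sup>2)"
  define d where "d = Inf (D ` M)"
  have ne: "D ` M \<noteq> {}" using csub_zero[OF M(1)] by blast
  have bdd: "bdd_below (D ` M)" unfolding D_def by (intro bdd_belowI[where m=0]) auto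
  have dle: "d \<le> D m" if "m \<in> M" for m unfolding d_def using bdd that by (intro cInf_lower) auto
  have "\<exists>m\<in>M. D m < d + inverse (real (Suc n))" for n
  proof -
    have "Inf (D ` M) < d + inverse (real (Suc n))" unfolding d_def by simp
    then show ?thesis using cInf_less_iff[OF ne bdd] by auto
  qed
  then obtain f where f: "\<And>n. f n \<in> M" "\<And>n. D (f n) < d + inverse (real (Suc n))" by metis
  have par: "(norm (f n - f k))\<^sup>2 \<le> 2 * D (f n) + 2 * D (f k) - 4 * d" for n k
  proof -
    have mid: "(1/2) *\<^sub>R (f n + f k) \<in> M" using f(1) M(1) csub_add csub_scaleR by blast
    have "(x - f n) + (x - f k) = 2 *\<^sub>R (x - (1/2) *\<^sub>R (f n + f k))" by (simp add: algebra_simps scaleR_2)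
    then have "(norm ((x - f n) + (x - f k)))\<^sup>2 = 4 * D ((1/2) *\<^sub>R (f n + f k))"
      unfolding D_def by (simp add: power2_eq_square)
    moreover have "(x - f n) - (x - f k) = - (f n - f k)" by simp
    ultimately show ?thesis using parallelogram[of "x - f n" "x - f k"] dle[OF mid]
      unfolding D_def by (simp add: norm_minus_commute)
  qed
  have "Cauchy f"
  proof (rule CauchyI)
    fix e :: real assume e: "e > 0"
    obtain N where N: "4 / e\<^sup>2 < real N" using reals_Archimedean2 by blast
    have N': "4 * inverse (real (Suc N)) < e\<^sup>2"
      using N e by (simp add: field_simps) (smt (verit) zero_less_power)
    show "\<exists>N. \<forall>m\<ge>N. \<forall>n\<ge>N. norm (f m - f n) < e"
    proof (intro exI allI impI)
      fix m n assume mn: "N \<le> m" "N \<le> n"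
      have "inverse (real (Suc m)) \<le> inverse (real (Suc N))" "inverse (real (Suc n)) \<le> inverse (real (Suc N))"
        using mn by (auto simp: field_simps)
      then have "(norm (f m - f n))\<^sup>2 < e\<^sup>2" using par[of m n] f(2)[of m] f(2)[of n] N' by linarith
      then show "norm (f m - f n) < e" using e by (simp add: power2_less_imp_less)
    qed
  qed
  then obtain p where p: "f \<longlonglongrightarrow> p" using Cauchy_convergent convergent_def by blast
  have pM: "p \<in> M" using closed_sequentially[OF M(2) f(1) p] .
  have "(\<lambda>n. D (f n)) \<longlonglongrightarrow> D p" unfolding D_def by (intro tendsto_intros p)
  moreover have "(\<lambda>n. d + inverse (real (Suc n))) \<longlonglongrightarrow> d + 0"
    by (intro tendsto_add tendsto_const LIMSEQ_inverse_real_of_nat)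
  ultimately have "D p \<le> d + 0" by (rule LIMSEQ_le) (use f(2) less_imp_le in blast)
  then have Dp: "D p \<le> d" by simp
  have "cinner (x - p) m = 0" if mM: "m \<in> M" for m
  proof (cases "m = 0")
    case True then show ?thesis by simp
  next
    case False
    let ?t = "cinner (x - p) m / complex_of_real ((norm m)\<^sup>2)"
    have "p + ?t *\<^sub>C m \<in> M" using M(1) pM mM csub_add csub_scaleC by blast
    then have "D p \<le> D (p + ?t *\<^sub>C m)" using dle Dp by fastforce
    also have "D (p + ?t *\<^sub>C m) = (norm (x - p))\<^sup>2 - (cmod (cinner (x - p) m))\<^sup>2 / (norm m)\<^sup>2"
      unfolding D_def using orth_expand[OF False, of "x - p"] by (simp add: algebra_simps)
    finally have "(cmod (cinner (x - p) m))\<^sup>2 / (norm m)\<^sup>2 \<le> 0" unfolding D_def by simp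
    then have "(cmod (cinner (x - p) m))\<^sup>2 \<le> 0" using False by (simp add: divide_le_0_iff)
    then show ?thesis by simp
  qed
  then show ?thesis using pM by blast
qed

lemma cinner_eq_zero_all: "(\<And>y. cinner (x::'a::complex_hilbert) y = 0) \<Longrightarrow> x = 0"
proof -
  assume h: "\<And>y. cinner x y = 0"
  have "cinner x x = 0" by (rule h)
  then show "x = 0" by (simp add: cinner_eq_zero_iff)
qed

lemma cinner_ext_right: "(\<And>y. cinner y (s::'a::complex_hilbert) = cinner y s') \<Longrightarrow> s = s'"
proof -
  assume h: "\<And>y. cinner y s = cinner y s'"
  have "cinner (s - s') (s - s') = 0" using h[of "s - s'"] by (simp add: cinner_diff_right)
  then show "s = s'" by (simp add: cinner_eq_zero_iff)
qed

lemma cinner_ext_left: "(\<And>y. cinner (s::'a::complex_hilbert) y = cinner s' y) \<Longrightarrow> s = s'"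
proof -
  assume h: "\<And>y. cinner s y = cinner s' y"
  have "cinner (s - s') (s - s') = 0" using h[of "s - s'"] by (simp add: cinner_diff_left)
  then show "s = s'" by (simp add: cinner_eq_zero_iff)
qed

lemma projection_op:
  fixes M :: "'a::complex_hilbert set"
  assumes M: "csub M" "closed M"
  shows "\<exists>P. bop P \<and> (\<forall>x. P x \<in> M \<and> (\<forall>m\<in>M. cinner (x - P x) m = 0))"
proof -
  define P where "P x = (SOME p. p \<in> M \<and> (\<forall>m\<in>M. cinner (x - p) m = 0))" for x
  have P: "P x \<in> M \<and> (\<forall>m\<in>M. cinner (x - P x) m = 0)" for x
  proof -
    have ex: "\<exists>p. p \<in> M \<and> (\<forall>m\<in>M. cinner (x - p) m = 0)" using projection[OF M, of x] by blast
    show ?thesis unfolding P_def by (rule someI_ex[OF ex])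
  qed
  have uniq: "p = P x" if "p \<in> M" "\<forall>m\<in>M. cinner (x - p) m = 0" for x p
  proof -
    have d: "p - P x \<in> M" using csub_diff[OF M(1)] that(1) P by blast
    have "cinner (x - P x) (p - P x) - cinner (x - p) (p - P x) = 0" using d that P by simp
    then have "cinner (p - P x) (p - P x) = 0" by (simp add: cinner_diff_left)
    then show ?thesis by (simp add: cinner_eq_zero_iff)
  qed
  have add: "P (x + y) = P x + P y" for x y
  proof (rule uniq[symmetric])
    show "P x + P y \<in> M" using P csub_add[OF M(1)] by blast
    have e: "x + y - (P x + P y) = (x - P x) + (y - P y)" by simp
    show "\<forall>m\<in>M. cinner (x + y - (P x + P y)) m = 0"
      unfolding e cinner_add_left using P by simp
  qed
  have sc: "P (c *\<^sub>C x) = c *\<^sub>C P x" for c x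
  proof (rule uniq[symmetric])
    show "c *\<^sub>C P x \<in> M" using P csub_scaleC[OF M(1)] by blast
    show "\<forall>m\<in>M. cinner (c *\<^sub>C x - c *\<^sub>C P x) m = 0"
      using P by (simp add: scaleC_diff_right[symmetric] cinner_scaleC_left)
  qed
  have nb: "norm (P x) \<le> norm x" for x
  proof -
    have "cinner (x - P x) (P x) = 0" using P by blast
    then have e: "cinner (P x) (P x) = cinner x (P x)" by (simp add: cinner_diff_left)
    have "(norm (P x))\<^sup>2 = Re (cinner x (P x))" using e by (simp add: norm_sq_cinner)
    also have "\<dots> \<le> norm x * norm (P x)" using cinner_CS[of x "P x"] complex_Re_le_cmod by (rule order_trans[rotated])
    finally have "norm (P x) * norm (P x) \<le> norm x * norm (P x)" by (simp add: power2_eq_square)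
    then show ?thesis by (cases "norm (P x) = 0") auto
  qed
  have "bounded_linear P"
    by (rule bounded_linear_intro[where K=1]) (auto simp: add scaleR_scaleC sc nb)
  then have "bop P" using sc by (simp add: bop_def)
  then show ?thesis using P by blast
qed

lemma riesz:
  fixes f :: "'a::complex_hilbert \<Rightarrow> complex"
  assumes bl: "bounded_linear f" and sc: "\<And>c x. f (c *\<^sub>C x) = c * f x"
  shows "\<exists>y. \<forall>x. f x = cinner x y"
proof (cases "\<forall>x. f x = 0")
  case True then show ?thesis by (intro exI[of _ 0]) simp
next
  case False
  then obtain z where z: "f z \<noteq> 0" by blast
  define N where "N = {x. f x = 0}"
  have lin: "linear f" using bl by (rule bounded_linear.linear)
  have csN: "csub N" unfolding csub_def N_def using lin sc by (simp add: linear_add linear_0)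
  have clN: "closed N" unfolding N_def
    by (intro closed_Collect_eq linear_continuous_on bl continuous_on_const)
  obtain p where p: "p \<in> N" "\<forall>m\<in>N. cinner (z - p) m = 0" using projection[OF csN clN] by blast
  define u where "u = z - p"
  have fu: "f u = f z" using p(1) lin unfolding u_def N_def by (simp add: linear_diff)
  have u0: "u \<noteq> 0" using fu z by (auto simp: lin linear_0)
  have uu: "cinner u u \<noteq> 0" using u0 by (simp add: cinner_eq_zero_iff)
  have "f x = cinner x ((cnj (f u / cinner u u)) *\<^sub>C u)" for x
  proof -
    have "f x *\<^sub>C u - f u *\<^sub>C x \<in> N" unfolding N_def using lin sc by (simp add: linear_diff)
    then have "cinner u (f x *\<^sub>C u - f u *\<^sub>C x) = 0" using p(2) unfolding u_def by blast
    then have "cnj (f x) * cinner u u - cnj (f u) * cinner u x = 0"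
      by (simp add: cinner_diff_right cinner_scaleC_right)
    then have "cnj (cnj (f x) * cinner u u - cnj (f u) * cinner u x) = 0" by simp
    then have "f x * cinner u u = f u * cinner x u"
      by (simp add: cinner_commute[of u x] cinner_commute[of u u, symmetric])
    then show ?thesis using uu by (simp add: cinner_scaleC_right field_simps)
  qed
  then show ?thesis by blast
qed

lemma adj_spec:
  fixes T :: "'a::complex_hilbert \<Rightarrow> 'a"
  assumes T: "bop T"
  shows "bop (adj T) \<and> (\<forall>x y. cinner (adj T x) y = cinner x (T y))"
proof -
  have ex: "\<exists>s. \<forall>y. cinner (T y) x = cinner y s" for x
  proof (rule riesz)
    show "bounded_linear (\<lambda>y. cinner (T y) x)"
      using bounded_linear_compose[OF bl_cinner_left bop_bl[OF T]] by simp
    show "cinner (T (c *\<^sub>C y)) x = c * cinner (T y) x" for c y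
      by (simp add: bop_scaleC[OF T] cinner_scaleC_left)
  qed
  define S where "S x = (SOME s. \<forall>y. cinner (T y) x = cinner y s)" for x
  have S: "cinner (T y) x = cinner y (S x)" for x y
    unfolding S_def using someI_ex[OF ex[of x]] by blast
  have S2: "cinner (S x) y = cinner x (T y)" for x y
    by (simp only: cinner_commute[of "S x" y] S[symmetric] cinner_commute[of x "T y"])
  have add: "S (x + x') = S x + S x'" for x x'
    by (rule cinner_ext_right) (simp add: S[symmetric] cinner_add_right)
  have sc: "S (c *\<^sub>C x) = c *\<^sub>C S x" for c x
    by (rule cinner_ext_right) (simp add: S[symmetric] cinner_scaleC_right)
  obtain K where K: "K > 0" "\<And>x. norm (T x) \<le> norm x * K"
    using bounded_linear.pos_bounded[OF bop_bl[OF T]] by blast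
  have nb: "norm (S x) \<le> norm x * K" for x
  proof -
    have "(norm (S x))\<^sup>2 = Re (cinner (T (S x)) x)" by (simp add: S norm_sq_cinner)
    also have "\<dots> \<le> norm (T (S x)) * norm x"
      using cinner_CS[of "T (S x)" x] complex_Re_le_cmod by (rule order_trans[rotated])
    also have "\<dots> \<le> norm (S x) * K * norm x" using K(2)[of "S x"] by (simp add: mult_right_mono)
    finally have "norm (S x) * norm (S x) \<le> norm (S x) * (norm x * K)" by (simp add: power2_eq_square mult_ac)
    then show ?thesis using K(1) by (cases "norm (S x) = 0") (auto simp: mult_le_cancel_left)
  qed
  have bS: "bop S" unfolding bop_def
    by (auto intro!: bounded_linear_intro[where K=K] simp: add sc scaleR_scaleC nb)
  have "adj T = S"
    unfolding adj_def
  proof (rule the_equality)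
    show "bop S \<and> (\<forall>x y. cinner (S x) y = cinner x (T y))" using bS S2 by blast
    fix S' assume h: "bop S' \<and> (\<forall>x y. cinner (S' x) y = cinner x (T y))"
    show "S' = S"
    proof
      fix x show "S' x = S x" by (rule cinner_ext_left) (use h S2 in simp)
    qed
  qed
  then show ?thesis using bS S2 by simp
qed

lemma positive_selfadj:
  assumes A: "positive_op A"
  shows "cinner (A x) y = cinner x (A y)"
proof -
  have bA: "bop A" and im: "\<And>z. Im (cinner (A z) z) = 0" using A by (auto simp: positive_op_def)
  let ?a = "cinner (A x) y" and ?b = "cinner (A y) x"
  have "Im (cinner (A (x + y)) (x + y)) = 0" by (rule im)
  then have 1: "Im ?a + Im ?b = 0" using im[of x] im[of y]
    by (simp add: bop_add[OF bA] cinner_add_left cinner_add_right)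
  have "Im (cinner (A (x + \<i> *\<^sub>C y)) (x + \<i> *\<^sub>C y)) = 0" by (rule im)
  then have 2: "Re ?b - Re ?a = 0" using im[of x] im[of y]
    by (simp add: bop_add[OF bA] bop_scaleC[OF bA] cinner_add_left cinner_add_right
        cinner_scaleC_left cinner_scaleC_right)
  have "?b = cnj ?a" using 1 2 by (simp add: complex_eq_iff)
  then show ?thesis by (simp add: cinner_commute[of x "A y"])
qed

lemma hform_A:
  assumes A: "positive_op A"
  shows "hform (\<lambda>x y. cinner (A x) y)"
proof -
  have bA: "bop A" using A by (simp add: positive_op_def)
  show ?thesis unfolding hform_def
  proof (intro conjI allI)
    show "cinner (A (x + y)) z = cinner (A x) z + cinner (A y) z" for x y z
      by (simp add: bop_add[OF bA] cinner_add_left)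
    show "cinner (A (a *\<^sub>C x)) y = a * cinner (A x) y" for a x y
      by (simp add: bop_scaleC[OF bA] cinner_scaleC_left)
    show "cinner (A y) x = cnj (cinner (A x) y)" for x y
      by (simp only: positive_selfadj[OF A, of y x] cinner_commute[of y "A x"])
    show "0 \<le> Re (cinner (A x) x)" for x using A by (simp add: positive_op_def)
  qed
qed

lemma ker_closure_range:
  assumes A: "positive_op A" and u: "u \<in> closure (range A)" and Au: "A u = 0"
  shows "u = 0"
proof -
  have "cinner u (A v) = 0" for v using positive_selfadj[OF A, of u v] Au by simp
  then have "range A \<subseteq> {m. cinner u m = 0}" by blast
  moreover have "closed {m. cinner u m = 0}"
    by (intro closed_Collect_eq linear_continuous_on bl_cinner_right continuous_on_const)
  ultimately have "closure (range A) \<subseteq> {m. cinner u m = 0}" by (rule closure_minimal)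
  then have "cinner u u = 0" using u by blast
  then show ?thesis by (simp add: cinner_eq_zero_iff)
qed

lemma csub_range: assumes "bop A" shows "csub (range A)"
  unfolding csub_def
proof (intro conjI ballI allI)
  have "0 = A 0" using bop_zero[OF assms] by simp
  then show "0 \<in> range A" by (rule range_eqI)
  show "x + y \<in> range A" if hx: "x \<in> range A" and hy: "y \<in> range A" for x y
  proof -
    obtain a b where "x = A a" "y = A b" using hx hy by blast
    then have "x + y = A (a + b)" using bop_add[OF assms] by simp
    then show ?thesis by (rule range_eqI)
  qed
  show "c *\<^sub>C x \<in> range A" if hx: "x \<in> range A" for c x
  proof -
    obtain a where "x = A a" using hx by blast
    then have "c *\<^sub>C x = A (c *\<^sub>C a)" using bop_scaleC[OF assms] by simp
    then show ?thesis by (rule range_eqI)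
  qed
qed

lemma proj_range:
  assumes A: "positive_op A"
  shows "\<exists>P. bop P \<and> (\<forall>x. P x \<in> closure (range A) \<and> A (P x) = A x)"
proof -
  have bA: "bop A" using A by (simp add: positive_op_def)
  obtain P where P0: "bop P" "\<forall>x. P x \<in> closure (range A) \<and> (\<forall>m\<in>closure (range A). cinner (x - P x) m = 0)"
    using projection_op[OF csub_closure[OF csub_range[OF bA]] closed_closure] by blast
  have P: "bop P" "\<And>x. P x \<in> closure (range A)"
     "\<And>x m. m \<in> closure (range A) \<Longrightarrow> cinner (x - P x) m = 0" using P0 by blast+
  have "A (P x) = A x" for x
  proof -
    have "cinner (A (x - P x)) v = 0" for v
    proof -
      have "A v \<in> closure (range A)" by (rule set_mp[OF closure_subset rangeI])
      then have "cinner (x - P x) (A v) = 0" by (rule P(3))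
      then show ?thesis using positive_selfadj[OF A, of "x - P x" v] by simp
    qed
    then have "A (x - P x) = 0" by (rule cinner_eq_zero_all)
    then have "A x - A (P x) = 0" by (simp only: bop_diff[OF bA])
    then have "A x = A (P x)" by (simp only: right_minus_eq)
    then show ?thesis by (rule sym)
  qed
  then show ?thesis using P by blast
qed

lemma sharpA_spec:
  assumes A: "positive_op A" and X: "X \<in> BA A"
  shows "bop (sharpA A X) \<and> A \<circ> sharpA A X = adj X \<circ> A \<and> range (sharpA A X) \<subseteq> closure (range A)"
proof -
  have bA: "bop A" using A by (simp add: positive_op_def)
  obtain R where R: "bop R" "A \<circ> R = adj X \<circ> A" using X by (auto simp: BA_def)
  obtain P where P: "bop P" "\<forall>x. P x \<in> closure (range A) \<and> A (P x) = A x"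
    using proj_range[OF A] by blast
  define R0 where "R0 = P \<circ> R"
  have bl: "bounded_linear (\<lambda>x. P (R x))" by (rule bounded_linear_compose[OF bop_bl[OF P(1)] bop_bl[OF R(1)]])
  have bR: "bop R0" unfolding bop_def R0_def comp_def using bl bop_scaleC[OF P(1)] bop_scaleC[OF R(1)] by simp
  have eq0: "A (R0 x) = adj X (A x)" for x
  proof -
    have "A (R0 x) = A (R x)" unfolding R0_def using P(2) by simp
    also have "\<dots> = (A \<circ> R) x" by simp
    also have "\<dots> = adj X (A x)" unfolding R(2) by simp
    finally show ?thesis .
  qed
  have eq: "A \<circ> R0 = adj X \<circ> A" using eq0 by (simp add: fun_eq_iff)
  have rg: "range R0 \<subseteq> closure (range A)" using P(2) unfolding R0_def by auto
  have cs: "csub (closure (range A))" by (rule csub_closure[OF csub_range[OF bA]])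
  have uniq: "R' = R0" if h: "bop R' \<and> A \<circ> R' = adj X \<circ> A \<and> range R' \<subseteq> closure (range A)" for R'
  proof
    fix x
    have m1: "R' x \<in> closure (range A)" using h by blast
    have m2: "R0 x \<in> closure (range A)" using rg by blast
    have d: "R' x - R0 x \<in> closure (range A)" using csub_diff[OF cs m1 m2] .
    have "A (R' x) = (A \<circ> R') x" by simp
    also have "\<dots> = adj X (A x)" using h by simp
    finally have a1: "A (R' x) = adj X (A x)" .
    have "A (R' x - R0 x) = A (R' x) - A (R0 x)" by (rule bop_diff[OF bA])
    also have "\<dots> = 0" using a1 eq0[of x] by simp
    finally have "A (R' x - R0 x) = 0" .
    then have "R' x - R0 x = 0" by (rule ker_closure_range[OF A d])
    then show "R' x = R0 x" by simp
  qed
  have "sharpA A X = R0"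
    unfolding sharpA_def
  proof (rule the_equality)
    show "bop R0 \<and> A \<circ> R0 = adj X \<circ> A \<and> range R0 \<subseteq> closure (range A)" using bR eq rg by blast
  next
    fix R' assume "bop R' \<and> A \<circ> R' = adj X \<circ> A \<and> range R' \<subseteq> closure (range A)"
    then show "R' = R0" by (rule uniq)
  qed
  then show ?thesis using bR eq rg by simp
qed

lemma sharp_prop:
  assumes A: "positive_op A" and X: "X \<in> BA A"
  shows "cinner (A (sharpA A X u)) v = cinner (A u) (X v)"
proof -
  have bX: "bop X" using X by (simp add: BA_def)
  have "A (sharpA A X u) = (A \<circ> sharpA A X) u" by simp
  also have "\<dots> = adj X (A u)" using sharpA_spec[OF A X] by simp
  finally have e: "A (sharpA A X u) = adj X (A u)" .
  show ?thesis unfolding e using adj_spec[OF bX] by blast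
qed

lemma power_trick:
  fixes A S :: "'a::complex_hilbert \<Rightarrow> 'a"
  assumes A: "positive_op A" and S: "bop S"
    and sa: "\<And>u v. cinner (A (S u)) v = cinner (A u) (S v)"
  shows "\<exists>K\<ge>0. \<forall>u. Re (cinner (A (S u)) (S u)) \<le> K * Re (cinner (A u) u)"
proof -
  have bA: "bop A" using A by (simp add: positive_op_def)
  obtain L where L: "L > 0" "\<And>x. norm (S x) \<le> norm x * L"
    using bounded_linear.pos_bounded[OF bop_bl[OF S]] by blast
  obtain CA where CA: "CA > 0" "\<And>x. norm (A x) \<le> norm x * CA"
    using bounded_linear.pos_bounded[OF bop_bl[OF bA]] by blast
  define N where "N v = Re (cinner (A v) v)" for v
  have hB: "hform (\<lambda>x y. cinner (A x) y)" by (rule hform_A[OF A])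
  have N0: "0 \<le> N v" for v unfolding N_def using A by (simp add: positive_op_def)
  have Nle: "N v \<le> CA * (norm v)\<^sup>2" for v
  proof -
    have "N v \<le> cmod (cinner (A v) v)" unfolding N_def by (rule complex_Re_le_cmod)
    also have "\<dots> \<le> norm (A v) * norm v" by (rule cinner_CS)
    also have "\<dots> \<le> norm v * CA * norm v" using CA(2)[of v] by (simp add: mult_right_mono)
    finally show ?thesis by (simp add: power2_eq_square mult_ac)
  qed
  define Sp where "Sp n = S ^^ n" for n
  have Sp_sa: "cinner (A (Sp n a)) b = cinner (A a) (Sp n b)" for n a b
  proof (induction n arbitrary: a b)
    case 0 then show ?case by (simp add: Sp_def)
  next
    case (Suc n)
    have "cinner (A (Sp (Suc n) a)) b = cinner (A (S (Sp n a))) b" by (simp add: Sp_def)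
    also have "\<dots> = cinner (A (Sp n a)) (S b)" by (rule sa)
    also have "\<dots> = cinner (A a) (Sp n (S b))" by (rule Suc.IH)
    also have "Sp n (S b) = Sp (Suc n) b" unfolding Sp_def by (simp add: funpow_swap1)
    finally show ?case .
  qed
  have Sp_norm: "norm (Sp n v) \<le> L ^ n * norm v" for n v
  proof (induction n)
    case 0 then show ?case by (simp add: Sp_def)
  next
    case (Suc n)
    have "norm (Sp (Suc n) v) = norm (S (Sp n v))" by (simp add: Sp_def)
    also have "\<dots> \<le> norm (Sp n v) * L" by (rule L(2))
    also have "\<dots> \<le> L ^ n * norm v * L" using Suc.IH L(1) by (simp add: mult_right_mono)
    finally show ?case by (simp add: mult_ac)
  qed
  have Sp_add: "Sp (m + n) v = Sp m (Sp n v)" for m n v unfolding Sp_def by (simp add: funpow_add)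
  have Sp1: "Sp 1 v = S v" "Sp (Suc 0) v = S v" for v unfolding Sp_def by simp_all
  have key: "(N (Sp m u))\<^sup>2 \<le> N u * N (Sp (2 * m) u)" for m u
  proof -
    have e: "cinner (A (Sp m u)) (Sp m u) = cinner (A u) (Sp (2 * m) u)"
      using Sp_sa[of m u "Sp m u"] Sp_add[of m m u] by (simp add: mult_2)
    have "N (Sp m u) \<le> cmod (cinner (A u) (Sp (2 * m) u))"
      unfolding N_def e by (rule complex_Re_le_cmod)
    then have "(N (Sp m u))\<^sup>2 \<le> (cmod (cinner (A u) (Sp (2 * m) u)))\<^sup>2"
      using N0 by (intro power_mono) auto
    also have "\<dots> \<le> N u * N (Sp (2 * m) u)" unfolding N_def by (rule hf_CS[OF hB])
    finally show ?thesis .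
  qed
  have "\<forall>u. N (S u) \<le> L\<^sup>2 * N u"
  proof (rule allI, rule ccontr)
    fix u assume "\<not> N (S u) \<le> L\<^sup>2 * N u"
    then have gt: "N (S u) > L\<^sup>2 * N u" by simp
    show False
    proof (cases "N u = 0")
      case True
      have "(N (S u))\<^sup>2 \<le> 0" using key[of 1 u] True by (simp add: Sp1)
      then show False using gt True by simp
    next
      case False
      then have Nu: "N u > 0" using N0[of u] by simp
      define h where "h k = N (Sp (2 ^ k) u) / (L ^ (2 ^ Suc k) * N u)" for k
      have Lpos: "L ^ n > 0" for n using L(1) by simp
      have hstep: "(h k)\<^sup>2 \<le> h (Suc k)" for k
      proof -
        define D where "D = L ^ (2 ^ Suc k) * N u"
        have Dpos: "D > 0" unfolding D_def using Lpos Nu by simp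
        have LL: "(L ^ (2 ^ Suc k))\<^sup>2 = L ^ (2 ^ Suc (Suc k))"
          by (simp add: power_mult[symmetric] mult.commute)
        have LL2: "L ^ (2 * 2 ^ k) * L ^ (2 * 2 ^ k) = L ^ (4 * 2 ^ k)"
          by (simp only: power_add[symmetric]) simp
        have "(h k)\<^sup>2 = (N (Sp (2 ^ k) u))\<^sup>2 / D\<^sup>2" unfolding h_def D_def by (simp add: power_divide)
        also have "\<dots> \<le> N u * N (Sp (2 ^ Suc k) u) / D\<^sup>2"
          using key[of "2 ^ k" u] Dpos by (simp add: divide_right_mono)
        also have "\<dots> = h (Suc k)"
          unfolding h_def D_def using Nu Lpos LL2
          by (simp add: power_mult_distrib LL[symmetric] field_simps power2_eq_square)
        finally show ?thesis .
      qed
      define h0 where "h0 = h 0"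
      have h0gt: "h0 > 1"
        unfolding h0_def h_def using gt Nu L(1) by (simp add: Sp1 field_simps power2_eq_square)
      have low: "h0 ^ (2 ^ k) \<le> h k" for k
      proof (induction k)
        case 0 then show ?case by (simp add: h0_def)
      next
        case (Suc k)
        have "h0 ^ (2 ^ Suc k) = (h0 ^ (2 ^ k))\<^sup>2" by (simp add: power_mult[symmetric] mult.commute)
        also have "\<dots> \<le> (h k)\<^sup>2" using Suc.IH h0gt by (intro power_mono) auto
        also have "\<dots> \<le> h (Suc k)" by (rule hstep)
        finally show ?case .
      qed
      define C where "C = CA * (norm u)\<^sup>2 / N u"
      have up: "h k \<le> C" for k
      proof -
        have "N (Sp (2 ^ k) u) \<le> CA * (norm (Sp (2 ^ k) u))\<^sup>2" by (rule Nle)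
        also have "\<dots> \<le> CA * (L ^ (2 ^ k) * norm u)\<^sup>2"
          using Sp_norm[of "2 ^ k" u] CA(1) by (intro mult_left_mono power_mono) auto
        also have "\<dots> = CA * (norm u)\<^sup>2 * L ^ (2 ^ Suc k)"
          by (simp add: power_mult_distrib power_mult[symmetric] mult.commute)
        finally have "N (Sp (2 ^ k) u) \<le> CA * (norm u)\<^sup>2 * L ^ (2 ^ Suc k)" .
        then show ?thesis unfolding h_def C_def using Nu Lpos
          by (simp add: divide_le_eq field_simps)
      qed
      obtain n where n: "C < h0 ^ n" using real_arch_pow[OF h0gt] by blast
      have "h0 ^ n \<le> h0 ^ (2 ^ n)" using h0gt less_exp[of n] by (intro power_increasing) auto
      also have "\<dots> \<le> C" using low[of n] up[of n] by simp
      finally show False using n by simp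
    qed
  qed
  then show ?thesis unfolding N_def by (intro exI[of _ "L\<^sup>2"]) simp
qed

lemma bop_comp: assumes f: "bop f" and g: "bop g" shows "bop (\<lambda>x. f (g x))"
proof -
  have "bounded_linear (\<lambda>x. f (g x))" by (rule bounded_linear_compose[OF bop_bl[OF f] bop_bl[OF g]])
  then show ?thesis unfolding bop_def by (simp add: bop_scaleC[OF f] bop_scaleC[OF g])
qed

lemma bop_plus: assumes f: "bop f" and g: "bop g" shows "bop (\<lambda>x. f x + g x)"
proof -
  have "bounded_linear (\<lambda>x. f x + g x)" by (rule bounded_linear_add[OF bop_bl[OF f] bop_bl[OF g]])
  then show ?thesis unfolding bop_def by (simp add: bop_scaleC[OF f] bop_scaleC[OF g] scaleC_add_right)
qed

context fixes A :: "'a::complex_hilbert \<Rightarrow> 'a" assumes A: "positive_op A"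
begin

lemma bA: "bop A" using A by (simp add: positive_op_def)
lemma hB: "hform (\<lambda>x y. cinner (A x) y)" by (rule hform_A[OF A])

lemma Acomm: "cinner (A y) x = cnj (cinner (A x) y)"
  using hf_commute[OF hB, of x y] by simp

lemma sharp_bop: "X \<in> BA A \<Longrightarrow> bop (sharpA A X)" using sharpA_spec[OF A] by blast

lemma adjA_left: assumes X: "X \<in> BA A"
  shows "cinner (A (X u)) v = cinner (A u) (sharpA A X v)"
proof -
  have "cinner (A (X u)) v = cnj (cinner (A v) (X u))" by (rule Acomm)
  also have "\<dots> = cnj (cinner (A (sharpA A X v)) u)" by (simp add: sharp_prop[OF A X])
  also have "\<dots> = cinner (A u) (sharpA A X v)" by (simp add: Acomm[of u "sharpA A X v"])
  finally show ?thesis .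
qed

lemma adjA_right: assumes X: "X \<in> BA A"
  shows "cinner (A w) (X z) = cinner (A (sharpA A X w)) z"
  by (simp add: sharp_prop[OF A X])

lemma A_eq_X: assumes X: "X \<in> BA A" and pq: "A p = A q"
  shows "A (X p) = A (X q)" "A (sharpA A X p) = A (sharpA A X q)"
proof -
  show "A (X p) = A (X q)"
    by (rule cinner_ext_left) (simp add: adjA_left[OF X] pq)
  show "A (sharpA A X p) = A (sharpA A X q)"
    by (rule cinner_ext_left) (simp add: sharp_prop[OF A X] pq)
qed

lemma N_eq: assumes pq: "A p = A q"
  shows "Re (cinner (A p) p) = Re (cinner (A q) q)"
proof -
  have "cinner (A p) p = cinner (A q) p" by (simp add: pq)
  also have "\<dots> = cinner q (A p)" by (rule positive_selfadj[OF A])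
  also have "\<dots> = cinner q (A q)" by (simp add: pq)
  also have "\<dots> = cnj (cinner (A q) q)" by (simp add: cinner_commute[of q "A q"])
  finally show ?thesis by simp
qed

lemma sharp_bound: assumes X: "X \<in> BA A"
  shows "\<exists>K\<ge>0. \<forall>u. Re (cinner (A (sharpA A X u)) (sharpA A X u)) \<le> K * Re (cinner (A u) u)"
proof -
  let ?Xs = "sharpA A X"
  have bX: "bop X" using X by (simp add: BA_def)
  have sa: "cinner (A (X (?Xs u))) v = cinner (A u) (X (?Xs v))" for u v
    by (simp add: adjA_left[OF X] sharp_prop[OF A X])
  obtain K where K: "K \<ge> 0" "\<And>u. Re (cinner (A (X (?Xs u))) (X (?Xs u))) \<le> K * Re (cinner (A u) u)"
    using power_trick[OF A bop_comp[OF bX sharp_bop[OF X]] sa] by blast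
  have "Re (cinner (A (?Xs u)) (?Xs u)) \<le> sqrt K * Re (cinner (A u) u)" for u
  proof -
    have N0: "0 \<le> Re (cinner (A v) v)" for v using A by (simp add: positive_op_def)
    have "Re (cinner (A (?Xs u)) (?Xs u)) = Re (cinner (A u) (X (?Xs u)))" by (simp add: sharp_prop[OF A X])
    also have "\<dots> \<le> cmod (cinner (A u) (X (?Xs u)))" by (rule complex_Re_le_cmod)
    finally have a: "Re (cinner (A (?Xs u)) (?Xs u)) \<le> cmod (cinner (A u) (X (?Xs u)))" .
    have "(cmod (cinner (A u) (X (?Xs u))))\<^sup>2 \<le> Re (cinner (A u) u) * Re (cinner (A (X (?Xs u))) (X (?Xs u)))"
      using hf_CS[OF hB, of u "X (?Xs u)"] by simp
    also have "\<dots> \<le> Re (cinner (A u) u) * (K * Re (cinner (A u) u))"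
      using K(2)[of u] N0[of u] by (rule mult_left_mono)
    also have "\<dots> = (sqrt K * Re (cinner (A u) u))\<^sup>2" using K(1) by (simp add: power2_eq_square)
    finally have sq: "(cmod (cinner (A u) (X (?Xs u))))\<^sup>2 \<le> (sqrt K * Re (cinner (A u) u))\<^sup>2" .
    have "cmod (cinner (A u) (X (?Xs u))) \<le> sqrt K * Re (cinner (A u) u)"
      by (rule power2_le_imp_le[OF sq]) (use K(1) N0[of u] in simp)
    then show ?thesis using a by linarith
  qed
  then show ?thesis using K(1) by (intro exI[of _ "sqrt K"]) auto
qed

lemma normA_pos: assumes x: "x \<in> closure (range A)" "x \<noteq> 0"
  shows "normA A x > 0"
proof (rule ccontr)
  assume na: "\<not> normA A x > 0"
  have r0: "0 \<le> Re (cinner (A x) x)" using A by (simp add: positive_op_def)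
  have "\<not> 0 < Re (cinner (A x) x)" using na unfolding normA_def by simp
  then have N: "Re (cinner (A x) x) = 0" using r0 by linarith
  have "cinner (A x) y = 0" for y
  proof -
    have "(cmod (cinner (A x) y))\<^sup>2 \<le> 0" using hf_CS[OF hB, of x y] N by simp
    then show ?thesis by simp
  qed
  then have "A x = 0" by (rule cinner_eq_zero_all)
  then show False using ker_closure_range[OF A x(1)] x(2) by blast
qed

end

lemma main_est:
  fixes A X Y :: "'a::complex_hilbert \<Rightarrow> 'a"
  assumes Ap: "positive_op A" and AX: "X \<in> BA A" and AY: "Y \<in> BA A"
    and nx: "normA A x = 1" and a0: "0 \<le> a" and b0: "0 \<le> b"
    and aw: "\<And>w. normA A (X (sharpA A X w) + Y (sharpA A Y w)) \<le> a * normA A w"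
    and bw: "\<And>w. cmod (cinner (A (X (sharpA A Y w))) w) \<le> b * Re (cinner (A w) w)"
  shows "cmod (cinner (A (sharpA A Y (X x))) x) \<le> a / 4 + b / 2"
proof -
  let ?Xs = "sharpA A X" and ?Ys = "sharpA A Y"
  have bA: "bop A" by (rule bA[OF Ap])
  have hB: "hform (\<lambda>x y. cinner (A x) y)" by (rule hB[OF Ap])
  have bX: "bop X" using AX by (simp add: BA_def)
  have bY: "bop Y" using AY by (simp add: BA_def)
  have bXs: "bop ?Xs" by (rule sharp_bop[OF Ap AX])
  have bYs: "bop ?Ys" by (rule sharp_bop[OF Ap AY])
  have N0: "0 \<le> Re (cinner (A v) v)" for v using Ap unfolding positive_op_def by blast
  have nsq: "(normA A v)\<^sup>2 = Re (cinner (A v) v)" for v unfolding normA_def using N0[of v] by simp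
  have nA0: "0 \<le> normA A v" for v unfolding normA_def using N0[of v] by simp
  have Nx: "Re (cinner (A x) x) = 1" using nsq[of x] nx by simp
  define c where "c = cinner (A (X x)) (Y x)"
  have c_eq: "cinner (A (?Ys (X x))) x = c" unfolding c_def by (rule sharp_prop[OF Ap AY])
  show ?thesis
  proof (cases "c = 0")
    case True then show ?thesis using c_eq a0 b0 by simp
  next
    case False
    have cm: "cmod c > 0" using False by simp
    define \<omega> where "\<omega> = cnj c / complex_of_real (cmod c)"
    have cc: "cnj c * c = complex_of_real ((cmod c)\<^sup>2)" using complex_norm_square[of c] by (simp add: mult.commute)
    have om_c: "\<omega> * c = complex_of_real (cmod c)"
    proof -
      have "\<omega> * c = complex_of_real ((cmod c)\<^sup>2) / complex_of_real (cmod c)"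
        unfolding \<omega>_def cc[symmetric] by simp
      also have "\<dots> = complex_of_real (cmod c)" using cm by (simp add: power2_eq_square)
      finally show ?thesis .
    qed
    have cmod_om: "cmod \<omega> = 1" unfolding \<omega>_def using cm by (simp add: norm_divide)
    have om_om: "\<omega> * cnj \<omega> = 1"
      using complex_norm_square[of \<omega>] cmod_om by simp
    have cnjc: "cnj \<omega> * cnj c = complex_of_real (cmod c)"
      using arg_cong[OF om_c, of cnj] by simp
    define w where "w = \<omega> *\<^sub>C X x + Y x"
    define W where "W = \<omega> *\<^sub>C X x - Y x"
    have cYX: "cinner (A (Y x)) (X x) = cnj c" unfolding c_def by (rule Acomm[OF Ap])
    define p where "p = cinner (A (X x)) (X x)"
    define q where "q = cinner (A (Y x)) (Y x)"
    have eZ: "cinner (A w) w = (\<omega> * cnj \<omega>) * p + \<omega> * c + cnj \<omega> * cnj c + q"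
      unfolding w_def p_def q_def c_def[symmetric]
      by (simp add: bop_add[OF bA] bop_scaleC[OF bA] cinner_add_left cinner_add_right cinner_scaleC_left cinner_scaleC_right cYX c_def[symmetric] algebra_simps)
    have eW: "cinner (A W) W = (\<omega> * cnj \<omega>) * p - \<omega> * c - cnj \<omega> * cnj c + q"
      unfolding W_def p_def q_def
      by (simp add: bop_diff[OF bA] bop_scaleC[OF bA] cinner_diff_left cinner_diff_right cinner_scaleC_left cinner_scaleC_right cYX c_def[symmetric] algebra_simps)
    have "cinner (A w) w - cinner (A W) W = 2 * (\<omega> * c) + 2 * (cnj \<omega> * cnj c)"
      unfolding eZ eW by (simp add: algebra_simps)
    also have "\<dots> = complex_of_real (4 * cmod c)" unfolding om_c cnjc by simp
    finally have "Re (cinner (A w) w - cinner (A W) W) = 4 * cmod c" by simp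
    then have "Re (cinner (A w) w) - Re (cinner (A W) W) = 4 * cmod c" by simp
    then have c4: "4 * cmod c \<le> Re (cinner (A w) w)" using N0[of W] by linarith
    define s where "s = Re (cinner (A w) w)"
    have s0: "0 \<le> s" unfolding s_def by (rule N0)
    define v where "v = cnj \<omega> *\<^sub>C ?Xs w + ?Ys w"
    have gen1: "cinner (A (\<omega> *\<^sub>C X x + Y x)) z = cinner (A x) (cnj \<omega> *\<^sub>C ?Xs z + ?Ys z)" for z
      by (simp add: bop_add[OF bA] bop_scaleC[OF bA] cinner_add_left cinner_add_right cinner_scaleC_left cinner_scaleC_right adjA_left[OF Ap AX] adjA_left[OF Ap AY])
    have ww: "cinner (A w) w = cinner (A x) v" unfolding v_def by (rule gen1[of w, folded w_def])
    have wws: "cinner (A w) w = complex_of_real s" unfolding s_def by (rule hf_self_real[OF hB])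
    have "s\<^sup>2 = (cmod (cinner (A x) v))\<^sup>2" unfolding ww[symmetric] wws using s0 by simp
    also have "\<dots> \<le> Re (cinner (A x) x) * Re (cinner (A v) v)" using hf_CS[OF hB, of x v] by simp
    finally have s2: "s\<^sup>2 \<le> Re (cinner (A v) v)" using Nx by simp
    have gen2: "cinner (A (cnj \<omega> *\<^sub>C ?Xs w + ?Ys w)) z = cinner (A w) (\<omega> *\<^sub>C X z + Y z)" for z
      by (simp add: bop_add[OF bA] bop_scaleC[OF bA] cinner_add_left cinner_add_right cinner_scaleC_left cinner_scaleC_right sharp_prop[OF Ap AX] sharp_prop[OF Ap AY])
    have vv: "cinner (A v) v = cinner (A w) (\<omega> *\<^sub>C X v + Y v)" by (rule gen2[of v, folded v_def])
    define t1 where "t1 = cinner (A w) (X (?Xs w) + Y (?Ys w))"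
    define t2 where "t2 = cinner (A w) (X (?Ys w))"
    define t3 where "t3 = cinner (A w) (Y (?Xs w))"
    have gen3: "cinner (A w) (\<omega> *\<^sub>C X v + Y v) = t1 + cnj \<omega> * t2 + \<omega> * t3"
    proof -
      have "cinner (A w) (\<omega> *\<^sub>C X v + Y v) = (\<omega> * cnj \<omega>) * cinner (A w) (X (?Xs w)) + cnj \<omega> * t2
          + \<omega> * t3 + cinner (A w) (Y (?Ys w))"
        unfolding v_def t2_def t3_def
        by (simp add: bop_add[OF bX] bop_scaleC[OF bX] bop_add[OF bY] bop_scaleC[OF bY] cinner_add_right cinner_scaleC_right algebra_simps)
      also have "\<dots> = t1 + cnj \<omega> * t2 + \<omega> * t3" unfolding om_om t1_def by (simp add: cinner_add_right)
      finally show ?thesis .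
    qed
    have B1: "cmod t1 \<le> a * s"
    proof -
      have "(cmod t1)\<^sup>2 \<le> Re (cinner (A w) w) * Re (cinner (A (X (?Xs w) + Y (?Ys w))) (X (?Xs w) + Y (?Ys w)))"
        unfolding t1_def using hf_CS[OF hB, of w "X (?Xs w) + Y (?Ys w)"] by simp
      also have "\<dots> = s * (normA A (X (?Xs w) + Y (?Ys w)))\<^sup>2" unfolding s_def nsq by simp
      also have "\<dots> \<le> s * (a * normA A w)\<^sup>2"
        using aw[of w] nA0 s0 by (intro mult_left_mono power_mono) auto
      also have "\<dots> = (a * s)\<^sup>2" unfolding power_mult_distrib nsq s_def[symmetric] by (simp add: power2_eq_square)
      finally have sq: "(cmod t1)\<^sup>2 \<le> (a * s)\<^sup>2" .
      show ?thesis by (rule power2_le_imp_le[OF sq]) (use a0 s0 in simp)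
    qed
    have B2: "cmod t2 \<le> b * s"
    proof -
      have "t2 = cnj (cinner (A (X (?Ys w))) w)" unfolding t2_def by (rule Acomm[OF Ap])
      then have "cmod t2 = cmod (cinner (A (X (?Ys w))) w)" by simp
      then show ?thesis using bw[of w] unfolding s_def by simp
    qed
    have B3: "cmod t3 = cmod t2"
    proof -
      have "t3 = cinner (A (?Ys w)) (?Xs w)" unfolding t3_def by (rule sharp_prop[OF Ap AY, symmetric])
      also have "\<dots> = cnj (cinner (A (?Xs w)) (?Ys w))" by (rule Acomm[OF Ap])
      also have "cinner (A (?Xs w)) (?Ys w) = t2" unfolding t2_def by (rule sharp_prop[OF Ap AX])
      finally show ?thesis by simp
    qed
    have "Re (cinner (A v) v) \<le> cmod (t1 + cnj \<omega> * t2 + \<omega> * t3)"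
      unfolding vv gen3 by (rule complex_Re_le_cmod)
    also have "\<dots> \<le> cmod t1 + cmod (cnj \<omega> * t2) + cmod (\<omega> * t3)"
      using norm_triangle_ineq[of "t1 + cnj \<omega> * t2" "\<omega> * t3"] norm_triangle_ineq[of t1 "cnj \<omega> * t2"] by linarith
    also have "\<dots> = cmod t1 + cmod t2 + cmod t3" by (simp add: norm_mult cmod_om)
    also have "\<dots> \<le> a * s + b * s + b * s" using B1 B2 B3 by simp
    finally have "s\<^sup>2 \<le> (a + 2 * b) * s" using s2 by (simp add: algebra_simps)
    then have sle: "s \<le> a + 2 * b"
      using s0 a0 b0 by (cases "s = 0") (auto simp: power2_eq_square mult_le_cancel_right)
    have "cmod (cinner (A (?Ys (X x))) x) = cmod c" by (simp add: c_eq)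
    also have "\<dots> \<le> s / 4" using c4 unfolding s_def by simp
    also have "\<dots> \<le> a / 4 + b / 2" using sle by simp
    finally show ?thesis .
  qed
qed

lemma bop_scaleR: "bop T \<Longrightarrow> T (r *\<^sub>R x) = r *\<^sub>R T x"
  by (simp add: scaleR_scaleC bop_scaleC)

theorem mainTheorem18:
  fixes A X Y :: "'a::complex_hilbert \<Rightarrow> 'a"
  assumes "positive_op A"
    and "X \<in> BA A"
    and "Y \<in> BA A"
  shows "numradA A (sharpA A Y \<circ> X)
    \<le> 1/4 * opnormA A (\<lambda>x. X (sharpA A X x) + Y (sharpA A Y x))
      + 1/2 * numradA A (X \<circ> sharpA A Y)"
proof -
  note Ap = assms(1) and AX = assms(2) and AY = assms(3)
  let ?Xs = "sharpA A X" and ?Ys = "sharpA A Y"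
  define T where "T = (\<lambda>x. X (?Xs x) + Y (?Ys x))"
  have T_app: "T u = X (?Xs u) + Y (?Ys u)" for u unfolding T_def by simp
  have bA: "bop A" by (rule bA[OF Ap])
  have hB: "hform (\<lambda>x y. cinner (A x) y)" by (rule hB[OF Ap])
  have bX: "bop X" using AX by (simp add: BA_def)
  have bY: "bop Y" using AY by (simp add: BA_def)
  have bXs: "bop ?Xs" by (rule sharp_bop[OF Ap AX])
  have bYs: "bop ?Ys" by (rule sharp_bop[OF Ap AY])
  have N0: "0 \<le> Re (cinner (A v) v)" for v using Ap unfolding positive_op_def by blast
  have nsq: "(normA A v)\<^sup>2 = Re (cinner (A v) v)" for v unfolding normA_def using N0[of v] by simp
  have nA0: "0 \<le> normA A v" for v unfolding normA_def using N0[of v] by simp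

  define OS where "OS = {normA A (T x) / normA A x | x. x \<in> closure (range A) \<and> x \<noteq> 0}"
  define a where "a = opnormA A T"
  have a_eq: "a = Sup (insert 0 OS)" unfolding a_def opnormA_def OS_def by simp
  have bT: "bop T" unfolding T_def by (rule bop_plus[OF bop_comp[OF bX bXs] bop_comp[OF bY bYs]])
  have Tsa: "cinner (A (T u)) v = cinner (A u) (T v)" for u v
  proof -
    have "cinner (A (T u)) v = cinner (A (X (?Xs u))) v + cinner (A (Y (?Ys u))) v" by (simp only: T_app bop_add[OF bA] cinner_add_left)
    also have "\<dots> = cinner (A u) (X (?Xs v)) + cinner (A u) (Y (?Ys v))" by (simp only: adjA_left[OF Ap AX] adjA_left[OF Ap AY] sharp_prop[OF Ap AX] sharp_prop[OF Ap AY])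
    also have "\<dots> = cinner (A u) (T v)" by (simp only: T_app cinner_add_right)
    finally show ?thesis .
  qed
  obtain KT where KT: "KT \<ge> 0" "\<And>u. Re (cinner (A (T u)) (T u)) \<le> KT * Re (cinner (A u) u)"
    using power_trick[OF Ap bT Tsa] by blast
  have Tb: "normA A (T u) \<le> sqrt KT * normA A u" for u
  proof -
    have "sqrt (Re (cinner (A (T u)) (T u))) \<le> sqrt (KT * Re (cinner (A u) u))"
      using KT(2)[of u] by (rule real_sqrt_le_mono)
    also have "\<dots> = sqrt KT * normA A u" by (simp add: normA_def real_sqrt_mult)
    finally show ?thesis unfolding normA_def .
  qed
  have bddOS: "bdd_above (insert 0 OS)"
  proof (rule bdd_aboveI[where M="sqrt KT"])
    fix r assume "r \<in> insert 0 OS"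
    then show "r \<le> sqrt KT"
    proof
      assume "r = 0" then show ?thesis using KT(1) by simp
    next
      assume "r \<in> OS"
      then obtain x where r: "r = normA A (T x) / normA A x" unfolding OS_def by blast
      show ?thesis
      proof (cases "normA A x = 0")
        case True then show ?thesis using r KT(1) by simp
      next
        case False
        then have "normA A x > 0" using nA0[of x] by simp
        then show ?thesis unfolding r using Tb[of x] by (simp add: pos_divide_le_eq)
      qed
    qed
  qed
  have a0: "0 \<le> a" unfolding a_eq using bddOS by (rule cSup_upper[rotated]) simp
  obtain P where P: "\<forall>x. P x \<in> closure (range A) \<and> A (P x) = A x"
    using proj_range[OF Ap] by blast
  have AT_eq: "A (T p) = A (T q)" if pq: "A p = A q" for p q
  proof -
    have "A (?Xs p) = A (?Xs q)" by (rule A_eq_X(2)[OF Ap AX pq])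
    then have 1: "A (X (?Xs p)) = A (X (?Xs q))" by (rule A_eq_X(1)[OF Ap AX])
    have "A (?Ys p) = A (?Ys q)" by (rule A_eq_X(2)[OF Ap AY pq])
    then have 2: "A (Y (?Ys p)) = A (Y (?Ys q))" by (rule A_eq_X(1)[OF Ap AY])
    show ?thesis using 1 2 by (simp add: T_app bop_add[OF bA])
  qed
  have aw: "normA A (T w) \<le> a * normA A w" for w
  proof -
    have Pw: "P w \<in> closure (range A)" "A (P w) = A w" using P by auto
    have e1: "normA A w = normA A (P w)" unfolding normA_def using N_eq[OF Ap Pw(2)] by simp
    have e2: "normA A (T w) = normA A (T (P w))"
      unfolding normA_def using N_eq[OF Ap AT_eq[OF Pw(2)]] by simp
    show ?thesis
    proof (cases "P w = 0")
      case True
      have T0: "T 0 = 0" by (rule bop_zero[OF bT])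
      have A0: "A 0 = 0" by (rule bop_zero[OF bA])
      have "normA A (T w) = normA A (T 0)" using e2 True by simp
      also have "\<dots> = 0" by (simp add: T0 A0 normA_def)
      finally have "normA A (T w) = 0" .
      then show ?thesis using a0 nA0[of w] by simp
    next
      case False
      have pos: "normA A (P w) > 0" by (rule normA_pos[OF Ap Pw(1) False])
      have "normA A (T (P w)) / normA A (P w) \<in> OS" unfolding OS_def using Pw(1) False by blast
      then have "normA A (T (P w)) / normA A (P w) \<le> a" unfolding a_eq using bddOS
        by (intro cSup_upper) auto
      then show ?thesis unfolding e1 e2 using pos by (simp add: pos_divide_le_eq)
    qed
  qed

  define b where "b = numradA A (X \<circ> ?Ys)"
  define NS where "NS = insert 0 (cmod ` numrangeA A (X \<circ> ?Ys))"
  have b_eq: "b = Sup NS" unfolding b_def NS_def numradA_def by simp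
  obtain KX where KX: "KX \<ge> 0" "\<And>u. Re (cinner (A (?Xs u)) (?Xs u)) \<le> KX * Re (cinner (A u) u)"
    using sharp_bound[OF Ap AX] by blast
  obtain KY where KY: "KY \<ge> 0" "\<And>u. Re (cinner (A (?Ys u)) (?Ys u)) \<le> KY * Re (cinner (A u) u)"
    using sharp_bound[OF Ap AY] by blast
  have bddNS: "bdd_above NS"
  proof (rule bdd_aboveI[where M="sqrt (KY * KX)"])
    fix r assume "r \<in> NS"
    then show "r \<le> sqrt (KY * KX)" unfolding NS_def
    proof
      assume "r = 0" then show ?thesis using KX KY by simp
    next
      assume "r \<in> cmod ` numrangeA A (X \<circ> ?Ys)"
      then obtain x where r: "r = cmod (cinner (A (X (?Ys x))) x)" and nx: "normA A x = 1"
        unfolding numrangeA_def by auto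
      have Nx: "Re (cinner (A x) x) = 1" using nsq[of x] nx by simp
      have "(cmod (cinner (A (X (?Ys x))) x))\<^sup>2 = (cmod (cinner (A (?Ys x)) (?Xs x)))\<^sup>2"
        by (simp add: adjA_left[OF Ap AX])
      also have "\<dots> \<le> Re (cinner (A (?Ys x)) (?Ys x)) * Re (cinner (A (?Xs x)) (?Xs x))"
        using hf_CS[OF hB, of "?Ys x" "?Xs x"] by simp
      also have "\<dots> \<le> KY * KX" using KX(2)[of x] KY(2)[of x] Nx N0[of "?Xs x"] N0[of "?Ys x"] KX(1) KY(1) by (intro mult_mono) simp_all
      finally show ?thesis unfolding r by (rule real_le_rsqrt)
    qed
  qed
  have b0: "0 \<le> b" unfolding b_eq using bddNS by (rule cSup_upper[rotated]) (simp add: NS_def)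
  have bw: "cmod (cinner (A (X (?Ys w))) w) \<le> b * Re (cinner (A w) w)" for w
  proof (cases "Re (cinner (A w) w) = 0")
    case True
    have "(cmod (cinner (A (X (?Ys w))) w))\<^sup>2 \<le> 0"
      using hf_CS[OF hB, of "X (?Ys w)" w] True by simp
    then show ?thesis using True by simp
  next
    case False
    define s where "s = Re (cinner (A w) w)"
    have s: "s > 0" using False N0[of w] unfolding s_def by simp
    define r where "r = 1 / sqrt s"
    have sq: "(sqrt s)\<^sup>2 = s" using s by simp
    have rr: "r * r = 1 / s" unfolding r_def using sq by (simp add: power2_eq_square)
    define w1 where "w1 = r *\<^sub>R w"
    have "cinner (A w1) w1 = complex_of_real r * (complex_of_real r * cinner (A w) w)"
      unfolding w1_def by (simp add: bop_scaleR[OF bA] cinner_scaleR_left cinner_scaleR_right)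
    then have "Re (cinner (A w1) w1) = r * r * s" unfolding s_def by simp
    then have "Re (cinner (A w1) w1) = 1" using rr s by simp
    then have nw1: "normA A w1 = 1" unfolding normA_def by simp
    have "cinner (A (X (?Ys w1))) w1 = complex_of_real r * (complex_of_real r * cinner (A (X (?Ys w))) w)"
      unfolding w1_def
      by (simp add: bop_scaleR[OF bA] bop_scaleR[OF bX] bop_scaleR[OF bYs] cinner_scaleR_left cinner_scaleR_right)
    then have e: "cinner (A (X (?Ys w1))) w1 = complex_of_real (r * r) * cinner (A (X (?Ys w))) w"
      by (simp add: mult.assoc)
    have "cinner (A ((X \<circ> ?Ys) w1)) w1 \<in> numrangeA A (X \<circ> ?Ys)"
      unfolding numrangeA_def using nw1 by blast
    then have "cmod (cinner (A (X (?Ys w1))) w1) \<in> NS" unfolding NS_def by simp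
    then have "cmod (cinner (A (X (?Ys w1))) w1) \<le> b" unfolding b_eq using bddNS by (intro cSup_upper)
    then have "cmod (cinner (A (X (?Ys w))) w) / s \<le> b" unfolding e rr using s by (simp add: norm_mult norm_divide)
    then show ?thesis using s unfolding s_def by (simp add: pos_divide_le_eq)
  qed

  have aw2: "normA A (X (?Xs w) + Y (?Ys w)) \<le> a * normA A w" for w using aw[of w] by (simp only: T_app)
  have main: "cmod (cinner (A ((?Ys \<circ> X) x)) x) \<le> a / 4 + b / 2" if nx: "normA A x = 1" for x
    using main_est[OF Ap AX AY nx a0 b0 aw2 bw] by simp

  have "numradA A (?Ys \<circ> X) \<le> a / 4 + b / 2"
    unfolding numradA_def
  proof (rule cSup_least)
    show "insert 0 (cmod ` numrangeA A (?Ys \<circ> X)) \<noteq> {}" by simp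
    fix r assume "r \<in> insert 0 (cmod ` numrangeA A (?Ys \<circ> X))"
    then show "r \<le> a / 4 + b / 2"
    proof
      assume "r = 0" then show ?thesis using a0 b0 by simp
    next
      assume "r \<in> cmod ` numrangeA A (?Ys \<circ> X)"
      then obtain x where "r = cmod (cinner (A ((?Ys \<circ> X) x)) x)" "normA A x = 1"
        unfolding numrangeA_def by auto
      then show ?thesis using main by simp
    qed
  qed
  then show ?thesis unfolding a_def b_def T_def by simp
qed

end
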